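(* Let $N\ge1$, let $J(x)$ be an $N\times N$ matrix whose entries are linear forms in $x\in\mathbb R^N$, let $H(x)=\tfrac12x^T\mathcal Hx$ be a quadratic form with constant symmetric $\mathcal H$, and let $f(x)=J(x)\nabla H(x)$. Let $\tilde x=\Phi_f(x,\varepsilon)$ be the Kahan map of $f$, and suppose $I-\varepsilon f'(x)$ and $I-\varepsilon J(x)\mathcal H$ are invertible. Then $$\tilde x-x=2\varepsilon\big(I-\varepsilon J(x)\mathcal H\big)^{-1}J\Big(\tfrac{x+\tilde x}{2}\Big)\nabla H(x),$$ and equivalently $$\tilde x=\big(I-\varepsilon J(x)\mathcal H\big)^{-1}\big(I+\varepsilon J(\tilde x)\mathcal H\big)x.$$
   Context: Kahan map: for a vector field $f$ on $\mathbb R^N$ whose components are homogeneous quadratic polynomials and a parameter $\varepsilon$, the Kahan map is $\Phi_f(x,\varepsilon)=\tilde x=x+2\varepsilon(I-\varepsilon f'(x))^{-1}f(x)=(I-\varepsilon f'(x))^{-1}x$, where $f'(x)$ is the Jacobi matrix of $f$ (defined wherever $I-\varepsilon f'(x)$ is invertible); it is the solution $\tilde x$ of $\frac{\tilde x-x}{2\varepsilon}=2f(\frac{x+\tilde x}{2})-\frac12f(x)-\frac12 f(\tilde x)$. *)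

theory Defs
  imports "HOL-Analysis.Analysis"
begin

text \<open>Meaningful where I - eps f'(x) is invertible.\<close>
definition kahan_map :: "(real^'n \<Rightarrow> real^'n) \<Rightarrow> real^'n \<Rightarrow> real \<Rightarrow> real^'n" where
  "kahan_map f x \<epsilon> = matrix_inv (mat 1 - \<epsilon> *\<^sub>R jacobian f (at x)) *v x"

end

theory Submission
  imports Defs
begin

lemma minv_solve:
  fixes M :: "real^'n^'n"
  assumes "invertible M" "M *v y = z"
  shows "y = matrix_inv M *v z"
proof -
  have "M ** matrix_inv M = mat 1 \<and> matrix_inv M ** M = mat 1"
    using assms(1) unfolding invertible_def matrix_inv_def by (rule someI_ex)
  then have "matrix_inv M ** M = mat 1" by blast
  then show ?thesis using assms(2)
    by (metis matrix_vector_mul_assoc matrix_vector_mul_lid)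
qed

lemma mv_bilinear: "bounded_bilinear (\<lambda>(A::real^'n^'m) (v::real^'n). A *v v)"
proof -
  have "bilinear (\<lambda>(A::real^'n^'m) (v::real^'n). A *v v)"
    unfolding bilinear_def
  proof (intro conjI allI)
    fix v :: "real^'n" show "linear (\<lambda>A::real^'n^'m. A *v v)"
      by (rule linearI) (simp_all add: matrix_vector_mult_def vec_eq_iff sum.distrib sum_distrib_left algebra_simps)
  next
    fix A :: "real^'n^'m" show "linear (\<lambda>v. A *v v)"
      by (rule matrix_vector_mul_linear)
  qed
  then show ?thesis by (simp add: bilinear_conv_bounded_bilinear)
qed

theorem mainTheorem8:
  fixes J :: "real^'n \<Rightarrow> real^'n^'n" and HH :: "real^'n^'n"
    and f :: "real^'n \<Rightarrow> real^'n" and x xt :: "real^'n" and \<epsilon> :: real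
  assumes J_lin: "linear J"
    and H_sym: "transpose HH = HH"
    and f_def: "\<And>y. f y = J y *v (HH *v y)"
    and inv1: "invertible (mat 1 - \<epsilon> *\<^sub>R jacobian f (at x))"
    and inv2: "invertible (mat 1 - \<epsilon> *\<^sub>R (J x ** HH))"
    and xt_def: "xt = kahan_map f x \<epsilon>"
  shows "xt - x = (2 * \<epsilon>) *\<^sub>R (matrix_inv (mat 1 - \<epsilon> *\<^sub>R (J x ** HH))
                    *v (J ((1/2) *\<^sub>R (x + xt)) *v (HH *v x)))
       \<and> xt = matrix_inv (mat 1 - \<epsilon> *\<^sub>R (J x ** HH)) *v ((mat 1 + \<epsilon> *\<^sub>R (J xt ** HH)) *v x)"
proof -
  define D where "D = (\<lambda>v. J x *v (HH *v v) + J v *v (HH *v x))"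
  have fe: "f = (\<lambda>y. J y *v (HH *v y))" using f_def by auto
  have dJ: "(J has_derivative J) (at x)"
    using J_lin by (simp add: linear_imp_has_derivative)
  have dH: "((\<lambda>y. HH *v y) has_derivative (\<lambda>y. HH *v y)) (at x)"
    by (simp add: linear_imp_has_derivative matrix_vector_mul_linear)
  have "(f has_derivative D) (at x)"
    unfolding fe D_def
    using bounded_bilinear.FDERIV[OF mv_bilinear dJ dH] by simp
  then have fd: "frechet_derivative f (at x) = D" by (metis frechet_derivative_at)
  have linD: "linear D"
    unfolding D_def
    by (rule linearI) (simp_all add: linear_add[OF J_lin] linear_scale[OF J_lin]
        matrix_vector_right_distrib matrix_vector_mult_add_rdistrib algebra_simps
        matrix_vector_mult_scaleR scaleR_matrix_vector_assoc[symmetric])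
  have jac: "jacobian f (at x) *v v = D v" for v
    unfolding jacobian_def fd using linD by (simp add: matrix_works)
  define A where "A = mat 1 - \<epsilon> *\<^sub>R jacobian f (at x)"
  have xt: "xt = matrix_inv A *v x" using xt_def unfolding kahan_map_def A_def by simp
  have "A ** matrix_inv A = mat 1 \<and> matrix_inv A ** A = mat 1"
    using inv1 unfolding invertible_def matrix_inv_def A_def by (rule someI_ex)
  then have "A *v xt = x" unfolding xt by (metis matrix_vector_mul_assoc matrix_vector_mul_lid)
  then have key: "xt - \<epsilon> *\<^sub>R (J x *v (HH *v xt) + J xt *v (HH *v x)) = x"
    unfolding A_def by (simp add: matrix_vector_mult_diff_rdistrib jac D_def scaleR_matrix_vector_assoc[symmetric])
  have lin2: "J (a *\<^sub>R u + b *\<^sub>R w) = a *\<^sub>R J u + b *\<^sub>R J w" for a b u w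
    using J_lin by (simp add: linear_add linear_scale)
  have mm: "(mat 1 - k *\<^sub>R (A ** B)) *v v = v - k *\<^sub>R (A *v (B *v v))"
    "(mat 1 + k *\<^sub>R (A ** B)) *v v = v + k *\<^sub>R (A *v (B *v v))"
    for k and A B :: "real^'n^'n" and v
    by (simp_all add: matrix_vector_mult_diff_rdistrib matrix_vector_mult_add_rdistrib
        scaleR_matrix_vector_assoc[symmetric] matrix_vector_mul_assoc[symmetric])
  have half: "J ((1/2) *\<^sub>R (x + xt)) = (1/2) *\<^sub>R (J x + J xt)"
    using J_lin by (simp add: linear_add linear_scale)
  show ?thesis
  proof
    have "(mat 1 - \<epsilon> *\<^sub>R (J x ** HH)) *v (xt - x) =
        (2 * \<epsilon>) *\<^sub>R (J ((1/2) *\<^sub>R (x + xt)) *v (HH *v x))"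
      unfolding mm half using key
      by (simp add: matrix_vector_right_distrib matrix_vector_mult_diff_distrib
          matrix_vector_mult_add_rdistrib scaleR_matrix_vector_assoc[symmetric] algebra_simps)
    then have "xt - x = matrix_inv (mat 1 - \<epsilon> *\<^sub>R (J x ** HH))
          *v ((2 * \<epsilon>) *\<^sub>R (J ((1/2) *\<^sub>R (x + xt)) *v (HH *v x)))"
      using minv_solve[OF inv2] by blast
    then show "xt - x = (2 * \<epsilon>) *\<^sub>R (matrix_inv (mat 1 - \<epsilon> *\<^sub>R (J x ** HH))
                    *v (J ((1/2) *\<^sub>R (x + xt)) *v (HH *v x)))"
      by (simp add: matrix_vector_mult_scaleR)
  next
    have "(mat 1 - \<epsilon> *\<^sub>R (J x ** HH)) *v xt = (mat 1 + \<epsilon> *\<^sub>R (J xt ** HH)) *v x"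
      unfolding mm using key by (simp add: algebra_simps)
    then show "xt = matrix_inv (mat 1 - \<epsilon> *\<^sub>R (J x ** HH)) *v ((mat 1 + \<epsilon> *\<^sub>R (J xt ** HH)) *v x)"
      using minv_solve[OF inv2] by blast
  qed
qed

end
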